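(* Let $A$ be a cyclic Leibniz algebra generated by $a$, with notation $L_a$, $p(x)=p_1(x)^{n_1}\cdots p_s(x)^{n_s}$ as in the context. Then the Frattini subalgebra of $A$ is $$\Phi(A)=\{b\in A : q(L_a)(b)=0\},\qquad q(x)=p_1(x)^{n_1-1}\cdots p_s(x)^{n_s-1}.$$
   Context: A (left) Leibniz algebra is an algebra satisfying $x(yz)=(xy)z+y(xz)$ for all $x,y,z$; all algebras are finite-dimensional over a field $F$. $A$ is a cyclic Leibniz algebra generated by $a$: $A$ is generated as an algebra by the single element $a$, and with $a^1=a$, $a^{k+1}=aa^k$, the elements $a,a^2,\dots,a^n$ form a basis of $A$ ($n=\dim A$). Write $aa^n=\alpha_2a^2+\cdots+\alpha_na^n$ (the coefficient of $a$ is necessarily $0$). $L_a:A\to A$ denotes left multiplication $b\mapsto ab$; its matrix in this basis is the companion matrix of $p(x)=x^n-\alpha_nx^{n-1}-\cdots-\alpha_2x$. Factor $p(x)=p_1(x)^{n_1}\cdots p_s(x)^{n_s}$ with $p_1,\dots,p_s$ the distinct monic irreducible factors over $F$, and $p_1(x)=x$. The Frattini subalgebra $\Phi(A)$ is the intersection of all maximal subalgebras of $A$. *)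

theory Defs
  imports "HOL-Computational_Algebra.Polynomial_Factorial" "HOL-Computational_Algebra.Field_as_Ring"
begin

definition bilinear_product ::
  "('f::field \<Rightarrow> 'v::ab_group_add \<Rightarrow> 'v) \<Rightarrow> ('v \<Rightarrow> 'v \<Rightarrow> 'v) \<Rightarrow> bool" where
  "bilinear_product sc m \<longleftrightarrow>
     (\<forall>x y z. m (x + y) z = m x z + m y z) \<and>
     (\<forall>x y z. m x (y + z) = m x y + m x z) \<and>
     (\<forall>c x y. m (sc c x) y = sc c (m x y)) \<and>
     (\<forall>c x y. m x (sc c y) = sc c (m x y))"

definition left_leibniz :: "('v::ab_group_add \<Rightarrow> 'v \<Rightarrow> 'v) \<Rightarrow> bool" where
  "left_leibniz m \<longleftrightarrow> (\<forall>x y z. m x (m y z) = m (m x y) z + m y (m x z))"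

text \<open>Left-normed powers: a^1 = a, a^(k+1) = a a^k (a^0 is unused, set to 0).\<close>
fun lpow :: "('v::zero \<Rightarrow> 'v \<Rightarrow> 'v) \<Rightarrow> 'v \<Rightarrow> nat \<Rightarrow> 'v" where
  "lpow m a 0 = 0"
| "lpow m a (Suc 0) = a"
| "lpow m a (Suc (Suc k)) = m a (lpow m a (Suc k))"

definition subalgebra ::
  "('f::field \<Rightarrow> 'v::ab_group_add \<Rightarrow> 'v) \<Rightarrow> ('v \<Rightarrow> 'v \<Rightarrow> 'v) \<Rightarrow> 'v set \<Rightarrow> bool" where
  "subalgebra sc m S \<longleftrightarrow> module.subspace sc S \<and> (\<forall>x\<in>S. \<forall>y\<in>S. m x y \<in> S)"

definition maximal_subalgebra ::
  "('f::field \<Rightarrow> 'v::ab_group_add \<Rightarrow> 'v) \<Rightarrow> ('v \<Rightarrow> 'v \<Rightarrow> 'v) \<Rightarrow> 'v set \<Rightarrow> bool" where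
  "maximal_subalgebra sc m S \<longleftrightarrow> subalgebra sc m S \<and> S \<noteq> UNIV \<and>
     (\<forall>T. subalgebra sc m T \<and> S \<subseteq> T \<longrightarrow> T = S \<or> T = UNIV)"

definition frattini ::
  "('f::field \<Rightarrow> 'v::ab_group_add \<Rightarrow> 'v) \<Rightarrow> ('v \<Rightarrow> 'v \<Rightarrow> 'v) \<Rightarrow> 'v set" where
  "frattini sc m = \<Inter> {S. maximal_subalgebra sc m S}"

definition generated_by ::
  "('f::field \<Rightarrow> 'v::ab_group_add \<Rightarrow> 'v) \<Rightarrow> ('v \<Rightarrow> 'v \<Rightarrow> 'v) \<Rightarrow> 'v \<Rightarrow> bool" where
  "generated_by sc m a \<longleftrightarrow> \<Inter> {S. subalgebra sc m S \<and> a \<in> S} = UNIV"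

definition poly_op ::
  "('f::field \<Rightarrow> 'v::ab_group_add \<Rightarrow> 'v) \<Rightarrow> 'f poly \<Rightarrow> ('v \<Rightarrow> 'v) \<Rightarrow> 'v \<Rightarrow> 'v" where
  "poly_op sc q L b = (\<Sum>i\<le>degree q. sc (coeff q i) ((L ^^ i) b))"

end

theory Submission
  imports Defs
begin



definition linop :: "('f::field \<Rightarrow> 'v::ab_group_add \<Rightarrow> 'v) \<Rightarrow> ('v \<Rightarrow> 'v) \<Rightarrow> bool" where
  "linop sc L \<longleftrightarrow> (\<forall>x y. L (x + y) = L x + L y) \<and> (\<forall>c x. L (sc c x) = sc c (L x))"

context vector_space begin

lemmas lin_def = linop_def

lemma lin_0: "linop scale L \<Longrightarrow> L 0 = 0"
  unfolding lin_def by (metis add_cancel_right_right)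

lemma lin_sum: "linop scale L \<Longrightarrow> L (sum g A) = (\<Sum>x\<in>A. L (g x))"
  by (induct A rule: infinite_finite_induct) (simp_all add: lin_0 lin_def)

lemma lin_pow: "linop scale L \<Longrightarrow> linop scale (L ^^ i)"
  by (induct i) (auto simp: lin_def)

lemma po_sum: "degree q < N \<Longrightarrow> poly_op scale q L b = (\<Sum>i<N. coeff q i *s (L^^i) b)"
  unfolding poly_op_def
proof -
  assume "degree q < N"
  have "{..degree q} \<subseteq> {..<N}" using \<open>degree q < N\<close> by auto
  then show "(\<Sum>i\<le>degree q. coeff q i *s (L ^^ i) b) = (\<Sum>i<N. coeff q i *s (L ^^ i) b)"
    by (intro sum.mono_neutral_left) (auto simp: coeff_eq_0)
qed

lemma po_0 [simp]: "poly_op scale 0 L b = 0"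
  by (simp add: poly_op_def)

lemma po_add: "poly_op scale (f + g) L b = poly_op scale f L b + poly_op scale g L b"
proof -
  define N where "N = Suc (max (degree f) (degree g))"
  have "degree (f+g) < N" unfolding N_def using degree_add_le
    by (metis le_imp_less_Suc max.cobounded1 max.cobounded2 max.strict_coboundedI1 nat_le_linear not_less_eq_eq degree_add_le_max)
  moreover have df: "degree f < N" "degree g < N" unfolding N_def by auto
  ultimately show ?thesis
    unfolding po_sum[OF \<open>degree (f+g) < N\<close>] po_sum[OF df(1)] po_sum[OF df(2)]
    by (simp_all add: N_def scale_left_distrib sum.distrib del: sum.lessThan_Suc)
qed

lemma po_smult: "poly_op scale (smult c f) L b = c *s poly_op scale f L b"
proof -
  have d: "degree (smult c f) < Suc (degree f)" "degree f < Suc (degree f)" by (simp_all add: le_imp_less_Suc)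
  then show ?thesis
    unfolding po_sum[OF d(1)] po_sum[OF d(2)]
    by (simp add: scale_sum_right del: sum.lessThan_Suc)
qed

lemma po_minus: "poly_op scale (- f) L b = - poly_op scale f L b"
  using po_smult[of "-1" f L b] by simp

lemma po_diff: "poly_op scale (f - g) L b = poly_op scale f L b - poly_op scale g L b"
  using po_add[of f "-g"] po_minus by simp

lemma po_pCons: "poly_op scale (pCons c f) L v = c *s v + poly_op scale f L (L v)"
proof -
  define N where "N = Suc (degree f)"
  have d1: "degree (pCons c f) < Suc N" unfolding N_def
    by (metis degree_pCons_le le_imp_less_Suc)
  have d2: "degree f < N" unfolding N_def by simp
  show ?thesis
    unfolding po_sum[OF d1] po_sum[OF d2] sum.lessThan_Suc_shift
    by (simp add: funpow_Suc_right del: funpow.simps sum.lessThan_Suc)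
qed

lemma po_zero_vec: "linop scale L \<Longrightarrow> poly_op scale f L 0 = 0"
  by (simp add: poly_op_def lin_0[OF lin_pow])

lemma po_L: "linop scale L \<Longrightarrow> poly_op scale f L (L v) = L (poly_op scale f L v)"
  apply (simp add: poly_op_def lin_sum)
  apply (rule sum.cong, simp)
  apply (subst lin_def[THEN iffD1, THEN conjunct2, rule_format], assumption)
  by (simp add: funpow_swap1)

lemma po_mult: "linop scale L \<Longrightarrow> poly_op scale (f * g) L v = poly_op scale f L (poly_op scale g L v)"
proof (induct f arbitrary: v rule: pCons_induct)
  case 0
  then show ?case by simp
next
  case (pCons c f)
  have "poly_op scale (pCons c f * g) L v = c *s poly_op scale g L v + poly_op scale (f * g) L (L v)"
    by (simp add: po_add po_smult po_pCons)
  also have "\<dots> = c *s poly_op scale g L v + poly_op scale f L (L (poly_op scale g L v))"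
    using pCons by (simp add: po_L)
  finally show ?case by (simp add: po_pCons)
qed

end



locale cyc = vector_space sc
  for sc :: "'f::field_gcd \<Rightarrow> 'v::ab_group_add \<Rightarrow> 'v" +
  fixes m :: "'v \<Rightarrow> 'v \<Rightarrow> 'v" and a :: 'v and n :: nat and \<alpha> :: "nat \<Rightarrow> 'f" and p :: "'f poly"
  assumes bil: "bilinear_product sc m"
    and leib: "left_leibniz m"
    and n_pos: "n \<ge> 1"
    and inj: "inj_on (lpow m a) {1..n}"
    and indep: "\<not> dependent (lpow m a ` {1..n})"
    and spans: "span (lpow m a ` {1..n}) = UNIV"
    and alpha: "m a (lpow m a n) = (\<Sum>k=1..n. sc (\<alpha> k) (lpow m a k))"
    and p_def: "p = monom 1 n - (\<Sum>k=1..n. monom (\<alpha> k) (k - 1))"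
begin

lemma m_addl: "m (x + y) z = m x z + m y z" using bil by (simp add: bilinear_product_def)
lemma m_addr: "m x (y + z) = m x y + m x z" using bil by (simp add: bilinear_product_def)
lemma m_scl: "m (sc c x) y = sc c (m x y)" using bil by (simp add: bilinear_product_def)
lemma m_scr: "m x (sc c y) = sc c (m x y)" using bil by (simp add: bilinear_product_def)
lemma m_0l [simp]: "m 0 y = 0" by (metis add_cancel_right_right m_addl)
lemma m_0r [simp]: "m x 0 = 0" by (metis add_cancel_right_right m_addr)

lemma linL: "linop sc (m a)" by (simp add: linop_def m_addr m_scr)

definition phi :: "'f poly \<Rightarrow> 'v" where "phi h = poly_op sc h (m a) a"

lemma phi_pCons: "phi (pCons c h) = sc c a + m a (phi h)"
  unfolding phi_def by (simp add: po_pCons po_L[OF linL])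
lemma phi_0 [simp]: "phi 0 = 0" by (simp add: phi_def)
lemma phi_add: "phi (f + g) = phi f + phi g" by (simp add: phi_def po_add)
lemma phi_diff: "phi (f - g) = phi f - phi g" by (simp add: phi_def po_diff)
lemma phi_smult: "phi (smult c f) = sc c (phi f)" by (simp add: phi_def po_smult)
lemma phi_mult: "phi (f * g) = poly_op sc f (m a) (phi g)" by (simp add: phi_def po_mult[OF linL])
lemma phi_1: "phi 1 = a"
  using phi_pCons[of 1 0] by (simp add: one_pCons)
lemma phi_x: "phi (pCons 0 h) = m a (phi h)" by (simp add: phi_pCons)

lemma phi_monom: "phi (monom 1 k) = lpow m a (Suc k)"
proof (induct k)
  case 0 then show ?case by (simp add: monom_0 phi_1 one_pCons[symmetric])
next
  case (Suc k)
  have "monom (1::'f) (Suc k) = pCons 0 (monom 1 k)" by (simp add: monom_Suc)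
  then show ?case using Suc by (simp add: phi_x)
qed

lemma phi_monom_c: "phi (monom c k) = sc c (lpow m a (Suc k))"
  using phi_smult[of c "monom 1 k"] by (simp add: phi_monom smult_monom)

lemma phi_sum: "phi (sum g A) = (\<Sum>x\<in>A. phi (g x))"
  by (induct A rule: infinite_finite_induct) (simp_all add: phi_add)

lemma phi_p: "phi p = 0"
proof -
  have "phi (monom 1 n) = m a (lpow m a n)"
    using n_pos by (cases n) (simp_all add: phi_monom)
  moreover have "phi (\<Sum>k=1..n. monom (\<alpha> k) (k - 1)) = (\<Sum>k=1..n. sc (\<alpha> k) (lpow m a k))"
    by (simp add: phi_sum phi_monom_c)
  ultimately show ?thesis using alpha by (simp add: p_def phi_diff)
qed

lemma po_zero: "poly_op sc f (m a) 0 = 0" by (rule po_zero_vec[OF linL])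

lemma phi_dvd: "p dvd h \<Longrightarrow> phi h = 0"
  by (auto simp: phi_mult phi_p po_zero mult.commute[of p])

lemma phi_surj: "\<exists>h. v = phi h"
proof -
  have "span (lpow m a ` {1..n}) \<subseteq> range phi"
  proof (rule span_minimal)
    show "lpow m a ` {1..n} \<subseteq> range phi"
    proof
      fix v assume "v \<in> lpow m a ` {1..n}"
      then obtain k where "k \<in> {1..n}" "v = lpow m a k" by auto
      then have "v = phi (monom 1 (k - 1))" by (simp add: phi_monom)
      then show "v \<in> range phi" by auto
    qed
    show "subspace (range phi)"
      unfolding subspace_def
      by (auto simp: phi_add[symmetric] phi_smult[symmetric] intro: range_eqI[of _ _ 0])
  qed
  then show ?thesis using spans by auto
qed

end


context cyc begin

lemma coeff_p: "coeff p i = (if i = n then 1 else if i < n then - \<alpha> (Suc i) else 0)"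
proof -
  have "coeff (\<Sum>k=1..n. monom (\<alpha> k) (k - 1)) i = (\<Sum>k=1..n. if k - 1 = i then \<alpha> k else 0)"
    by (simp add: coeff_sum coeff_monom)
  also have "\<dots> = (if i < n then \<alpha> (Suc i) else 0)"
  proof (cases "i < n")
    case True
    have "(\<Sum>k=1..n. if k - 1 = i then \<alpha> k else 0) = (\<Sum>k\<in>{Suc i}. if k - 1 = i then \<alpha> k else 0)"
      by (rule sum.mono_neutral_right) (use True in auto)
    then show ?thesis using True by simp
  next
    case False
    then show ?thesis by (auto intro!: sum.neutral)
  qed
  finally have "coeff (\<Sum>k=1..n. monom (\<alpha> k) (k - 1)) i = (if i < n then \<alpha> (Suc i) else 0)" .
  then show ?thesis by (simp add: p_def coeff_monom)
qed

lemma degree_p: "degree p = n"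
proof (rule order.antisym)
  show "degree p \<le> n" by (rule degree_le) (simp add: coeff_p)
  show "n \<le> degree p" by (rule le_degree) (simp add: coeff_p)
qed

lemma lead_p: "lead_coeff p = 1" by (simp add: degree_p coeff_p)
lemma p_nz: "p \<noteq> 0" using lead_p by auto

lemma lpow_funpow: "((m a) ^^ i) a = lpow m a (Suc i)"
  by (induct i) (simp_all)

lemma phi_small: assumes "degree h < n" "phi h = 0" shows "h = 0"
proof -
  define g where "g i = lpow m a (Suc i)" for i
  have img: "lpow m a ` {1..n} = g ` {..<n}"
  proof -
    have "{1..n} = Suc ` {..<n}"
      by (simp add: atLeastLessThanSuc_atLeastAtMost image_Suc_lessThan)
    then show ?thesis by (simp add: g_def image_image)
  qed
  have injg: "inj_on g {..<n}"
    using inj unfolding g_def inj_on_def by (metis Suc_leI atLeastAtMost_iff le_add1 lessThan_iff nat.inject plus_1_eq_Suc)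
  define u where "u v = coeff h (the_inv_into {..<n} g v)" for v
  have "phi h = (\<Sum>i<n. sc (coeff h i) (g i))"
    unfolding phi_def po_sum[OF assms(1)] g_def lpow_funpow ..
  also have "\<dots> = (\<Sum>v\<in>g ` {..<n}. sc (u v) v)"
    by (subst sum.reindex[OF injg]) (auto simp: u_def the_inv_into_f_f[OF injg])
  finally have s0: "(\<Sum>v\<in>g ` {..<n}. sc (u v) v) = 0" using assms(2) by simp
  have "coeff h i = 0" for i
  proof (cases "i < n")
    case True
    have "u (g i) = 0"
      by (rule independentD[OF indep[unfolded img] _ order.refl s0]) (use True in auto)
    then show ?thesis using True by (simp add: u_def the_inv_into_f_f[OF injg])
  next
    case False then show ?thesis using assms(1) by (simp add: coeff_eq_0)
  qed
  then show ?thesis by (simp add: poly_eq_iff)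
qed

lemma phi_zero_iff: "phi h = 0 \<longleftrightarrow> p dvd h"
proof
  assume h: "phi h = 0"
  have "phi (h mod p) = phi h - phi ((h div p) * p)"
    by (metis add_diff_cancel_left' div_mult_mod_eq phi_add)
  also have "\<dots> = 0" using h phi_dvd by simp
  finally have z: "phi (h mod p) = 0" .
  have "h mod p = 0"
  proof (rule ccontr)
    assume "h mod p \<noteq> 0"
    then have "degree (h mod p) < n" using degree_mod_less'[OF p_nz] degree_p by auto
    then show False using phi_small z \<open>h mod p \<noteq> 0\<close> by blast
  qed
  then show "p dvd h" by (simp add: dvd_eq_mod_eq_0)
qed (rule phi_dvd)

lemma phi_eq_iff: "phi f = phi g \<longleftrightarrow> p dvd f - g"
  using phi_zero_iff[of "f - g"] by (simp add: phi_diff)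

end


context cyc begin

definition LA :: "'v \<Rightarrow> bool" where "LA z \<longleftrightarrow> (\<forall>y. m z y = 0)"

lemma LA_L: "LA z \<Longrightarrow> LA (m a z)"
  using leib unfolding LA_def left_leibniz_def by (metis add.right_neutral m_0r)

lemma LA_aa: "LA (m a a)"
  using leib unfolding LA_def left_leibniz_def by (metis add_cancel_left_left)

lemma LA_add: "LA x \<Longrightarrow> LA y \<Longrightarrow> LA (x + y)" by (simp add: LA_def m_addl)
lemma LA_sc: "LA x \<Longrightarrow> LA (sc c x)" by (simp add: LA_def m_scl)

lemma LA_Lphi: "LA (m a (phi h))"
proof (induct h rule: pCons_induct)
  case 0 then show ?case by (simp add: LA_def)
next
  case (pCons c h)
  have "m a (phi (pCons c h)) = sc c (m a a) + m a (m a (phi h))"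
    by (simp add: phi_pCons m_addr m_scr)
  then show ?case using pCons LA_aa LA_L LA_add LA_sc by metis
qed

lemma LA_Lall: "LA (m a w)" using phi_surj LA_Lphi by metis

lemma m_phi_left: "m (phi g) y = sc (coeff g 0) (m a y)"
proof (cases g rule: pCons_cases)
  case (pCons c h)
  have "m (m a (phi h)) y = 0" using LA_Lall unfolding LA_def by blast
  then show ?thesis by (simp add: pCons phi_pCons m_addl m_scl)
qed

lemma a_nz: "a \<noteq> 0"
proof
  assume "a = 0"
  then have "0 \<in> lpow m a ` {1..n}" using n_pos by (auto intro!: image_eqI[of _ _ 1])
  then show False using indep dependent_zero by blast
qed

lemma coeff_p0: "coeff p 0 = 0"
proof (rule ccontr)
  assume c: "coeff p 0 \<noteq> 0"
  obtain h where ph: "p = pCons (coeff p 0) h" by (metis coeff_pCons_0 pCons_cases)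
  have "sc (coeff p 0) a + m a (phi h) = 0" using phi_p ph phi_pCons by metis
  then have eq: "sc (coeff p 0) a = - m a (phi h)" by (simp add: eq_neg_iff_add_eq_0)
  have "LA (sc (coeff p 0) a)" unfolding eq using LA_Lall LA_sc[of _ "-1"] by simp
  then have "LA (sc (inverse (coeff p 0)) (sc (coeff p 0) a))" by (rule LA_sc)
  then have "LA a" using c by simp
  then have "m a w = 0" for w by (simp add: LA_def)
  then have "sc (coeff p 0) a = 0" using eq by simp
  then show False using c a_nz by simp
qed

abbreviation X :: "'f poly" where "X \<equiv> [:0, 1:]"

lemma X_mult: "X * h = pCons 0 h" by simp

lemma X_norm: "normalize X = X"
  by (simp add: normalize_poly_eq_map_poly)

lemma X_prime: "prime X"
  using X_norm by (simp add: prime_def prime_elem_linear_field_poly)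

lemma X_dvd: "f \<in> range (\<lambda>h. X * h) \<longleftrightarrow> coeff f 0 = 0"
proof
  assume "coeff f 0 = 0"
  then obtain h where "f = pCons 0 h" by (metis coeff_pCons_0 pCons_cases)
  then show "f \<in> range (\<lambda>h. X * h)" by (simp add: X_mult)
qed auto

lemma X_pf: "X \<in> prime_factors p"
proof -
  obtain h where "p = pCons 0 h" using coeff_p0 by (metis coeff_pCons_0 pCons_cases)
  then have "X dvd p" by (metis X_mult dvd_triv_left)
  then show ?thesis using X_prime p_nz by (simp add: in_prime_factors_iff)
qed


definition M :: "'f poly \<Rightarrow> 'v set" where "M f = range (\<lambda>h. phi (f * h))"

lemma mem_M: "phi g \<in> M f \<longleftrightarrow> f dvd g" if "f dvd p"
proof
  assume "phi g \<in> M f"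
  then obtain h where "phi g = phi (f * h)" by (auto simp: M_def)
  then have "p dvd g - f * h" by (simp add: phi_eq_iff)
  then have "f dvd g - f * h" using that dvd_trans by blast
  then show "f dvd g" by (metis dvd_add dvd_triv_left diff_add_cancel)
qed (auto simp: M_def)

lemma M_subalg: "subalgebra sc m (M f)"
  unfolding subalgebra_def
proof
  show "subspace (M f)"
    unfolding subspace_def M_def
  proof (intro conjI ballI allI)
    show "0 \<in> range (\<lambda>h. phi (f * h))" by (auto intro: range_eqI[of _ _ 0])
    fix x y assume "x \<in> range (\<lambda>h. phi (f * h))" "y \<in> range (\<lambda>h. phi (f * h))"
    then obtain h1 h2 where "x = phi (f * h1)" "y = phi (f * h2)" by auto
    then show "x + y \<in> range (\<lambda>h. phi (f * h))"
      by (auto simp: phi_add[symmetric] distrib_left intro!: range_eqI[of _ _ "h1 + h2"])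
  next
    fix c x assume "x \<in> range (\<lambda>h. phi (f * h))"
    then obtain h where "x = phi (f * h)" by auto
    then show "sc c x \<in> range (\<lambda>h. phi (f * h))"
      by (auto simp: phi_smult[symmetric] intro!: range_eqI[of _ _ "smult c h"])
  qed
  show "\<forall>x\<in>M f. \<forall>y\<in>M f. m x y \<in> M f"
  proof (intro ballI)
    fix x y assume "x \<in> M f" "y \<in> M f"
    then obtain h1 h2 where xy: "x = phi (f * h1)" "y = phi (f * h2)" by (auto simp: M_def)
    have "m x y = sc (coeff (f * h1) 0) (phi (pCons 0 (f * h2)))"
      by (simp add: xy m_phi_left phi_x)
    also have "\<dots> = phi (smult (coeff (f * h1) 0) (pCons 0 (f * h2)))"
      by (simp only: phi_smult)
    also have "\<dots> = phi (f * smult (coeff (f * h1) 0) (pCons 0 h2))"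
      by simp
    finally show "m x y \<in> M f" unfolding M_def by blast
  qed
qed

lemma M_proper: assumes "f \<in> prime_factors p" shows "M f \<noteq> UNIV"
proof
  assume "M f = UNIV"
  then have "phi 1 \<in> M f" by simp
  moreover have "f dvd p" using assms by (rule in_prime_factors_imp_dvd)
  ultimately have "f dvd 1" using mem_M by blast
  moreover have "prime f" using assms by (rule in_prime_factors_imp_prime)
  ultimately show False using not_prime_unit by blast
qed

lemma M_mono: assumes "f \<in> prime_factors p" "g \<in> prime_factors p" "M f \<subseteq> M g" shows "f = g"
proof -
  have "phi f \<in> M f" unfolding M_def by (rule range_eqI[of _ _ 1]) simp
  moreover have "g dvd p" using assms(2) by (rule in_prime_factors_imp_dvd)
  ultimately have "g dvd f" using assms(3) mem_M by blast
  moreover have "prime f" "prime g" using assms(1,2) by (auto intro: in_prime_factors_imp_prime)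
  ultimately show ?thesis using primes_dvd_imp_eq by blast
qed

lemma J_mult:
  assumes S: "subalgebra sc m S" and inv: "\<And>y. y \<in> S \<Longrightarrow> m a y \<in> S" and h: "phi h \<in> S"
  shows "phi (k * h) \<in> S"
proof (induct k rule: pCons_induct)
  case 0 then show ?case using S by (simp add: subalgebra_def subspace_def)
next
  case (pCons c k)
  have "phi (pCons c k * h) = sc c (phi h) + m a (phi (k * h))"
    by (simp add: phi_add phi_smult phi_x)
  then show ?case using S pCons inv h by (simp add: subalgebra_def subspace_def)
qed

lemma B: assumes S: "subalgebra sc m S" "S \<noteq> UNIV" shows "\<exists>f\<in>prime_factors p. S \<subseteq> M f"
proof (cases "S \<subseteq> M X")
  case True then show ?thesis using X_pf by blast
next
  case False
  then obtain s where "s \<in> S" "s \<notin> M X" by auto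
  moreover obtain g where g: "s = phi g" using phi_surj by blast
  ultimately have gS: "phi g \<in> S" and gM: "phi g \<notin> M X" by auto
  have c: "coeff g 0 \<noteq> 0"
  proof
    assume "coeff g 0 = 0"
    then obtain h where "g = pCons 0 h" by (metis coeff_pCons_0 pCons_cases)
    then have "phi g = phi (X * h)" by (simp only: X_mult)
    then show False using gM by (simp add: M_def)
  qed
  have sub: "subspace S" using S by (simp add: subalgebra_def)
  have inv: "m a y \<in> S" if "y \<in> S" for y
  proof -
    have "m (phi g) y \<in> S" using S gS that by (simp add: subalgebra_def)
    then have "sc (inverse (coeff g 0)) (m (phi g) y) \<in> S" using sub by (simp add: subspace_def)
    then show ?thesis using c by (simp add: m_phi_left)
  qed
  define J where "J = {h. phi h \<in> S}"
  have Jm: "k * h \<in> J" if "h \<in> J" for k h using J_mult[OF S(1) inv] that by (simp add: J_def)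
  have Jd: "h1 - h2 \<in> J" if "h1 \<in> J" "h2 \<in> J" for h1 h2
    using that sub unfolding J_def by (simp add: phi_diff subspace_diff)
  have pJ: "p \<in> J" using sub by (simp add: J_def phi_p subspace_def)
  have "p \<in> J \<and> p \<noteq> 0" using pJ p_nz by blast
  from ex_has_least_nat[of "\<lambda>h. h \<in> J \<and> h \<noteq> 0", OF this, of degree]
  obtain d where d: "d \<in> J \<and> d \<noteq> 0" "\<And>h. h \<in> J \<and> h \<noteq> 0 \<Longrightarrow> degree d \<le> degree h"
    by blast
  have ddvd: "d dvd h" if "h \<in> J" for h
  proof -
    have "h mod d = h - (h div d) * d" by (simp add: mod_div_decomp minus_div_mult_eq_mod)
    moreover have "(h div d) * d \<in> J" using Jm d by blast
    ultimately have "h mod d \<in> J" using Jd that by metis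
    show ?thesis
    proof (rule ccontr)
      assume "\<not> d dvd h"
      then have nz: "h mod d \<noteq> 0" by (simp add: dvd_eq_mod_eq_0)
      have "degree (h mod d) < degree d" using d(1) nz by (intro degree_mod_less') auto
      moreover have "degree d \<le> degree (h mod d)" using d(2) \<open>h mod d \<in> J\<close> nz by blast
      ultimately show False by simp
    qed
  qed
  have "\<not> is_unit d"
  proof
    assume "is_unit d"
    then obtain k where k: "1 = d * k" by (rule dvdE)
    have "k * d \<in> J" using Jm d by blast
    then have "1 \<in> J" using k by (simp add: mult.commute)
    then have "phi (k * 1) \<in> S" for k using Jm unfolding J_def by blast
    then have "phi k \<in> S" for k by simp
    then have "y \<in> S" for y using phi_surj[of y] by blast
    then show False using S by blast
  qed
  then obtain f where f: "f dvd d" "prime f" using prime_divisor_exists d by blast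
  have "f dvd p" using f ddvd pJ dvd_trans by blast
  then have fpf: "f \<in> prime_factors p" using f p_nz by (simp add: in_prime_factors_iff)
  have "S \<subseteq> M f"
  proof
    fix y assume "y \<in> S"
    obtain h where "y = phi h" using phi_surj by blast
    then have "h \<in> J" using \<open>y \<in> S\<close> by (simp add: J_def)
    then have "f dvd h" using ddvd f dvd_trans by blast
    then show "y \<in> M f" using \<open>y = phi h\<close> \<open>f dvd p\<close> mem_M by blast
  qed
  then show ?thesis using fpf by blast
qed

lemma maximal_iff: "maximal_subalgebra sc m S \<longleftrightarrow> S \<in> M ` prime_factors p"
proof
  assume S: "maximal_subalgebra sc m S"
  have "subalgebra sc m S" "S \<noteq> UNIV" using S by (simp_all add: maximal_subalgebra_def)
  then obtain f where "f \<in> prime_factors p" "S \<subseteq> M f"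
    using B by blast
  moreover then have "M f = S \<or> M f = UNIV" using S M_subalg by (simp add: maximal_subalgebra_def)
  moreover have "M f \<noteq> UNIV" using M_proper \<open>f \<in> prime_factors p\<close> by blast
  ultimately show "S \<in> M ` prime_factors p" by blast
next
  assume "S \<in> M ` prime_factors p"
  then obtain f where f: "f \<in> prime_factors p" "S = M f" by blast
  show "maximal_subalgebra sc m S"
    unfolding maximal_subalgebra_def
  proof (intro conjI allI impI)
    show "subalgebra sc m S" using f M_subalg by simp
    show "S \<noteq> UNIV" using f M_proper by simp
    fix T assume T: "subalgebra sc m T \<and> S \<subseteq> T"
    show "T = S \<or> T = UNIV"
    proof (cases "T = UNIV")
      case False
      then obtain g where "g \<in> prime_factors p" "T \<subseteq> M g" using B T by blast
      then have "f = g" using M_mono f T by blast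
      then show ?thesis using T f \<open>T \<subseteq> M g\<close> by blast
    qed simp
  qed
qed

end



lemma prod_primes_dvd:
  fixes A :: "'a::factorial_semiring_gcd set"
  assumes "finite A" "\<And>f. f \<in> A \<Longrightarrow> prime f" "\<And>f. f \<in> A \<Longrightarrow> f dvd g"
  shows "\<Prod>A dvd g"
  using assms
proof (induct A rule: finite_induct)
  case empty then show ?case by simp
next
  case (insert x F)
  have "\<not> x dvd \<Prod>F"
  proof
    assume "x dvd \<Prod>F"
    moreover have "prime x" using insert.prems by simp
    ultimately obtain y where "y \<in> F" "x dvd y" using prime_dvd_prod_iff[of F x id] insert.hyps(1) by auto
    moreover have "prime y" using insert.prems \<open>y \<in> F\<close> by simp
    ultimately have "x = y" using \<open>prime x\<close> primes_dvd_imp_eq by blast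
    then show False using insert.hyps(2) \<open>y \<in> F\<close> by simp
  qed
  moreover have "prime x" using insert.prems by simp
  ultimately have "coprime x (\<Prod>F)" by (simp add: prime_imp_coprime)
  moreover have "\<Prod>F dvd g" using insert.hyps insert.prems by simp
  moreover have "x dvd g" using insert.prems by simp
  ultimately show ?case using insert.hyps by (simp add: divides_mult)
qed

context cyc begin

lemma frattini_eq: "frattini sc m = \<Inter> (M ` prime_factors p)"
proof -
  have "{S. maximal_subalgebra sc m S} = M ` prime_factors p" by (rule set_eqI) (simp only: mem_Collect_eq maximal_iff)
  then show ?thesis unfolding frattini_def by simp
qed

lemma main:
  assumes q_def: "q = (\<Prod>f\<in>prime_factors p. f ^ (multiplicity f p - 1))"
  shows "frattini sc m = {b. poly_op sc q (m a) b = 0}"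
proof -
  define r where "r = \<Prod>(prime_factors p)"
  have normp: "normalize p = p"
    unfolding normalize_poly_eq_map_poly lead_p by (simp add: map_poly_idI)
  have pqr: "p = q * r"
  proof -
    have "p = (\<Prod>f\<in>prime_factors p. f ^ multiplicity f p)" using prod_prime_factors[OF p_nz] normp by simp
    also have "\<dots> = (\<Prod>f\<in>prime_factors p. f ^ (multiplicity f p - 1) * f)"
    proof (rule prod.cong[OF refl])
      fix f assume "f \<in> prime_factors p"
      then have "multiplicity f p > 0" by (simp add: prime_factors_multiplicity)
      then show "f ^ multiplicity f p = f ^ (multiplicity f p - 1) * f"
        using power_Suc2[of f "multiplicity f p - 1"] by simp
    qed
    also have "\<dots> = q * r" by (simp add: prod.distrib q_def r_def)
    finally show ?thesis .
  qed
  have qnz: "q \<noteq> 0" using pqr p_nz by auto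
  have "b \<in> \<Inter> (M ` prime_factors p) \<longleftrightarrow> poly_op sc q (m a) b = 0" for b
  proof -
    obtain g where g: "b = phi g" using phi_surj by blast
    have "b \<in> \<Inter> (M ` prime_factors p) \<longleftrightarrow> (\<forall>f\<in>prime_factors p. f dvd g)"
    proof -
      have "\<forall>f\<in>prime_factors p. (phi g \<in> M f) = (f dvd g)"
        by (intro ballI mem_M in_prime_factors_imp_dvd)
      then show ?thesis unfolding g by blast
    qed
    also have "\<dots> \<longleftrightarrow> r dvd g"
    proof
      assume "\<forall>f\<in>prime_factors p. f dvd g"
      then show "r dvd g" unfolding r_def by (intro prod_primes_dvd) auto
    next
      assume "r dvd g"
      show "\<forall>f\<in>prime_factors p. f dvd g"
      proof
        fix f assume f: "f \<in> prime_factors p"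
        have "f dvd \<Prod>(prime_factors p)" using dvd_prodI[of "prime_factors p" f "\<lambda>x. x"] f by simp
        then show "f dvd g" using \<open>r dvd g\<close> unfolding r_def by (rule dvd_trans)
      qed
    qed
    also have "\<dots> \<longleftrightarrow> p dvd q * g" using dvd_times_left_cancel_iff[OF qnz, of r g] pqr by simp
    also have "\<dots> \<longleftrightarrow> phi (q * g) = 0" by (simp add: phi_zero_iff)
    also have "\<dots> \<longleftrightarrow> poly_op sc q (m a) b = 0" by (simp add: g phi_mult)
    finally show ?thesis .
  qed
  then show ?thesis unfolding frattini_eq by blast
qed

end


theorem mainTheorem7:
  fixes sc :: "'f::field_gcd \<Rightarrow> 'v::ab_group_add \<Rightarrow> 'v"
    and m :: "'v \<Rightarrow> 'v \<Rightarrow> 'v"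
    and a :: 'v
    and n :: nat
    and \<alpha> :: "nat \<Rightarrow> 'f"
    and p q :: "'f poly"
  assumes vs: "vector_space sc"
    and bil: "bilinear_product sc m"
    and leib: "left_leibniz m"
    and gen: "generated_by sc m a"
    and n_pos: "n \<ge> 1"
    and inj: "inj_on (lpow m a) {1..n}"
    and indep: "\<not> module.dependent sc (lpow m a ` {1..n})"
    and spans: "module.span sc (lpow m a ` {1..n}) = UNIV"
    and alpha: "m a (lpow m a n) = (\<Sum>k=1..n. sc (\<alpha> k) (lpow m a k))"
    and p_def: "p = monom 1 n - (\<Sum>k=1..n. monom (\<alpha> k) (k - 1))"
    and q_def: "q = (\<Prod>f\<in>prime_factors p. f ^ (multiplicity f p - 1))"
  shows "frattini sc m = {b. poly_op sc q (m a) b = 0}"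
proof -
  have c: "cyc sc m a n \<alpha> p"
    unfolding cyc_def cyc_axioms_def
    using vs bil leib n_pos inj indep spans alpha p_def by blast
  show ?thesis by (rule cyc.main[OF c q_def])
qed

end
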